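(* Fix $p,t,n$ and a dropout distribution $\vec a$, and let $\Phi$ be any criterion satisfying (C.1)--(C.3). Then for every crossover design $d$ we have $\phi_0(d)\le\phi_1(d)$. Moreover, $e_0(d)\ge e_1(d)\,g(d)$ for every design $d$; in particular, if $d$ is $\phi_1$-optimal then $e_0(d)\ge g(d)$.
   Context: A crossover design $d$ with $p$ periods, $t$ treatments and $n$ subjects assigns treatment $d(k,u)\in\{1,\dots,t\}$ to subject $u$ in period $k$. Responses follow $Y_{dku}=\mu+\pi_k+\varsigma_u+\tau_{d(k,u)}+\gamma_{d(k-1,u)}+\varepsilon_{ku}$ (with $\gamma_{d(0,u)}=0$), errors independent with mean $0$, variance $1$. In vector form, with responses ordered subject by subject and within subject by period, $Y_d=1_{np}\mu+Z\pi+U\varsigma+T_d\tau+F_d\gamma+\varepsilon$, where $Z=1_n\otimes I_p$, $U=I_n\otimes 1_p$, $T_d$ is the $np\times t$ treatment incidence matrix (row $(u,k)$ is the indicator of $d(k,u)$) and $F_d$ the carryover incidence matrix (row $(u,1)$ zero, row $(u,k)$ the indicator of $d(k-1,u)$ for $k\ge2$). Subject dropout: $l_u\in\{1,\dots,p\}$ is the number of periods subject $u$ stays (no re-entry); $l_1,\dots,l_n$ are i.i.d., independent of the design and outcomes, with $P(l_u=k)=a_k$, $\vec a=(a_1,\dots,a_p)$. For integers $k\le i$, $I^k_{ij}$ is the $i\times j$ matrix whose upper-left $k\times k$ block is $I_k$ and other entries $0$. Let $M=\mathrm{diag}(I^{l_1}_{l_1p},\dots,I^{l_n}_{l_np})$,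 $\mathrm{pr}^\perp(G)=I-G(G'G)^-G'$ ($^-$ a generalized inverse, $[G_1|G_2]$ column concatenation), $O=M'\,\mathrm{pr}^\perp([MZ|MU])\,M$, $C_{d11}(l)=T_d'OT_d$, $C_{d12}(l)=T_d'OF_d=C_{d21}(l)'$, $C_{d22}(l)=F_d'OF_d$, and $C_d(\tau,l)=C_{d11}(l)-C_{d12}(l)C_{d22}(l)^-C_{d21}(l)$ (the information matrix for $\tau$ given dropout realization $l$). Let $C_{dij}=\mathbb E\,C_{dij}(l)$ (expectation over $l$) and $C_d=C_{d11}-C_{d12}C_{d22}^-C_{d21}$. A criterion $\Phi$ is a real function on $t\times t$ nonnegative definite matrices with (C.1) $\Phi$ concave; (C.2) $\Phi(S'CS)=\Phi(C)$ for every permutation matrix $S$; (C.3) $b\mapsto\Phi(bC)$ nondecreasing for $b>0$. Define $\phi_0(d)=\mathbb E\,\Phi(C_d(\tau,l))$ and $\phi_1(d)=\Phi(C_d)$. For $i=0,1$ let $d_i^*$ be a design maximizing $\phi_i$ over all designs with the given $p,t,n$, and $e_i(d)=\phi_i(d)/\phi_i(d_i^* )$; let $g(d)=\phi_0(d)/\phi_1(d)$. A design is $\phi_1$-optimal if it maximizes $\phi_1$. *)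

theory Defs
  imports Complex_Main "Jordan_Normal_Form.Matrix"
begin

(* Conventions: periods k in {1..p}, subjects u in {1..n}, treatments in {1..t}.
   A design is d :: nat => nat => nat, d k u = treatment of subject u in period k.
   Matrix rows are 0-based: row (u-1)*p + (k-1) corresponds to (subject u, period k);
   column j-1 corresponds to treatment j. *)

definition is_design :: "nat \<Rightarrow> nat \<Rightarrow> nat \<Rightarrow> (nat \<Rightarrow> nat \<Rightarrow> nat) \<Rightarrow> bool" where
  "is_design p t n d \<longleftrightarrow> (\<forall>k\<in>{1..p}. \<forall>u\<in>{1..n}. d k u \<in> {1..t})"

(* Z = 1_n \<otimes> I_p *)
definition Zmat :: "nat \<Rightarrow> nat \<Rightarrow> real mat" where
  "Zmat p n = mat (n*p) p (\<lambda>(r,c). if r mod p = c then 1 else 0)"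

(* U = I_n \<otimes> 1_p *)
definition Umat :: "nat \<Rightarrow> nat \<Rightarrow> real mat" where
  "Umat p n = mat (n*p) n (\<lambda>(r,c). if r div p = c then 1 else 0)"

definition Tmat :: "nat \<Rightarrow> nat \<Rightarrow> nat \<Rightarrow> (nat \<Rightarrow> nat \<Rightarrow> nat) \<Rightarrow> real mat" where
  "Tmat p t n d = mat (n*p) t (\<lambda>(r,c). if d (r mod p + 1) (r div p + 1) = c + 1 then 1 else 0)"

(* carryover incidence matrix F_d: first period row zero, otherwise indicator of d(k-1,u) *)
definition Fmat :: "nat \<Rightarrow> nat \<Rightarrow> nat \<Rightarrow> (nat \<Rightarrow> nat \<Rightarrow> nat) \<Rightarrow> real mat" where
  "Fmat p t n d = mat (n*p) t (\<lambda>(r,c). if 1 \<le> r mod p \<and> d (r mod p) (r div p + 1) = c + 1 then 1 else 0)"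

(* M = diag(I^{l_1}_{l_1 p}, ..., I^{l_n}_{l_n p}), block diagonal *)
definition Mmat :: "nat \<Rightarrow> nat \<Rightarrow> (nat \<Rightarrow> nat) \<Rightarrow> real mat" where
  "Mmat p n l = mat (\<Sum>u<n. l (Suc u)) (n*p)
     (\<lambda>(r,c). if \<exists>u<n. \<exists>k<l (Suc u). r = (\<Sum>v<u. l (Suc v)) + k \<and> c = u*p + k then 1 else 0)"

definition col_concat :: "real mat \<Rightarrow> real mat \<Rightarrow> real mat" where
  "col_concat A B = mat (dim_row A) (dim_col A + dim_col B)
     (\<lambda>(i,j). if j < dim_col A then A $$ (i,j) else B $$ (i, j - dim_col A))"

definition ginv :: "real mat \<Rightarrow> real mat" where
  "ginv A = (SOME G. G \<in> carrier_mat (dim_col A) (dim_row A) \<and> A * G * A = A)"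

definition pr_perp :: "real mat \<Rightarrow> real mat" where
  "pr_perp G = 1\<^sub>m (dim_row G) - G * ginv (transpose_mat G * G) * transpose_mat G"

definition Omat :: "nat \<Rightarrow> nat \<Rightarrow> (nat \<Rightarrow> nat) \<Rightarrow> real mat" where
  "Omat p n l = transpose_mat (Mmat p n l)
     * pr_perp (col_concat (Mmat p n l * Zmat p n) (Mmat p n l * Umat p n)) * Mmat p n l"

definition C11 where "C11 p t n d l = transpose_mat (Tmat p t n d) * Omat p n l * Tmat p t n d"
definition C12 where "C12 p t n d l = transpose_mat (Tmat p t n d) * Omat p n l * Fmat p t n d"
definition C21 where "C21 p t n d l = transpose_mat (Fmat p t n d) * Omat p n l * Tmat p t n d"
definition C22 where "C22 p t n d l = transpose_mat (Fmat p t n d) * Omat p n l * Fmat p t n d"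

definition Cinfo :: "nat \<Rightarrow> nat \<Rightarrow> nat \<Rightarrow> (nat \<Rightarrow> nat \<Rightarrow> nat) \<Rightarrow> (nat \<Rightarrow> nat) \<Rightarrow> real mat" where
  "Cinfo p t n d l = C11 p t n d l - C12 p t n d l * ginv (C22 p t n d l) * C21 p t n d l"

definition dropouts :: "nat \<Rightarrow> nat \<Rightarrow> (nat \<Rightarrow> nat) set" where
  "dropouts p n = PiE {1..n} (\<lambda>_. {1..p})"

definition dprob :: "nat \<Rightarrow> (nat \<Rightarrow> real) \<Rightarrow> (nat \<Rightarrow> nat) \<Rightarrow> real" where
  "dprob n a l = (\<Prod>u\<in>{1..n}. a (l u))"

definition is_dropout_dist :: "nat \<Rightarrow> (nat \<Rightarrow> real) \<Rightarrow> bool" where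
  "is_dropout_dist p a \<longleftrightarrow> (\<forall>k\<in>{1..p}. 0 \<le> a k) \<and> (\<Sum>k\<in>{1..p}. a k) = 1"

definition Emat :: "nat \<Rightarrow> nat \<Rightarrow> nat \<Rightarrow> (nat \<Rightarrow> real) \<Rightarrow> ((nat \<Rightarrow> nat) \<Rightarrow> real mat) \<Rightarrow> real mat" where
  "Emat p n m a C = mat m m (\<lambda>(i,j). \<Sum>l\<in>dropouts p n. dprob n a l * C l $$ (i,j))"

definition Cbar :: "nat \<Rightarrow> nat \<Rightarrow> nat \<Rightarrow> (nat \<Rightarrow> real) \<Rightarrow> (nat \<Rightarrow> nat \<Rightarrow> nat) \<Rightarrow> real mat" where
  "Cbar p t n a d = Emat p n t a (C11 p t n d) - Emat p n t a (C12 p t n d)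
      * ginv (Emat p n t a (C22 p t n d)) * Emat p n t a (C21 p t n d)"

definition phi0 :: "nat \<Rightarrow> nat \<Rightarrow> nat \<Rightarrow> (nat \<Rightarrow> real) \<Rightarrow> (real mat \<Rightarrow> real) \<Rightarrow> (nat \<Rightarrow> nat \<Rightarrow> nat) \<Rightarrow> real" where
  "phi0 p t n a \<Phi> d = (\<Sum>l\<in>dropouts p n. dprob n a l * \<Phi> (Cinfo p t n d l))"

definition phi1 :: "nat \<Rightarrow> nat \<Rightarrow> nat \<Rightarrow> (nat \<Rightarrow> real) \<Rightarrow> (real mat \<Rightarrow> real) \<Rightarrow> (nat \<Rightarrow> nat \<Rightarrow> nat) \<Rightarrow> real" where
  "phi1 p t n a \<Phi> d = \<Phi> (Cbar p t n a d)"

definition nnd :: "nat \<Rightarrow> real mat \<Rightarrow> bool" where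
  "nnd t A \<longleftrightarrow> A \<in> carrier_mat t t \<and> transpose_mat A = A \<and>
     (\<forall>x \<in> carrier_vec t. 0 \<le> x \<bullet> (A *\<^sub>v x))"

definition perm_mat :: "nat \<Rightarrow> real mat \<Rightarrow> bool" where
  "perm_mat t S \<longleftrightarrow> (\<exists>\<sigma>. bij_betw \<sigma> {..<t} {..<t} \<and>
     S = mat t t (\<lambda>(i,j). if \<sigma> i = j then 1 else 0))"

(* criterion: (C.1) concave, (C.2) permutation invariant, (C.3) b \<mapsto> \<Phi>(bC) nondecreasing *)
definition is_criterion :: "nat \<Rightarrow> (real mat \<Rightarrow> real) \<Rightarrow> bool" where
  "is_criterion t \<Phi> \<longleftrightarrow>
     (\<forall>A B w. nnd t A \<longrightarrow> nnd t B \<longrightarrow> 0 \<le> w \<longrightarrow> w \<le> 1 \<longrightarrow>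
        w * \<Phi> A + (1 - w) * \<Phi> B \<le> \<Phi> (w \<cdot>\<^sub>m A + (1 - w) \<cdot>\<^sub>m B)) \<and>
     (\<forall>C S. nnd t C \<longrightarrow> perm_mat t S \<longrightarrow> \<Phi> (transpose_mat S * C * S) = \<Phi> C) \<and>
     (\<forall>C b b'. nnd t C \<longrightarrow> 0 < b \<longrightarrow> b \<le> b' \<longrightarrow> \<Phi> (b \<cdot>\<^sub>m C) \<le> \<Phi> (b' \<cdot>\<^sub>m C))"

definition is_optimal :: "nat \<Rightarrow> nat \<Rightarrow> nat \<Rightarrow> ((nat \<Rightarrow> nat \<Rightarrow> nat) \<Rightarrow> real) \<Rightarrow> (nat \<Rightarrow> nat \<Rightarrow> nat) \<Rightarrow> bool" where
  "is_optimal p t n \<phi> d \<longleftrightarrow> is_design p t n d \<and> (\<forall>d'. is_design p t n d' \<longrightarrow> \<phi> d' \<le> \<phi> d)"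

end

theory Submission
  imports Defs "Jordan_Normal_Form.Gauss_Jordan_Elimination"
begin

lemma ginv_exists:
  fixes A :: "real mat"
  shows "\<exists>G. G \<in> carrier_mat (dim_col A) (dim_row A) \<and> A * G * A = A"
proof -
  define nr where "nr = dim_row A"
  define nc where "nc = dim_col A"
  have A: "A \<in> carrier_mat nr nc" unfolding nr_def nc_def by auto
  define R where "R = gauss_jordan_single A"
  note gj = gauss_jordan_single[OF A R_def[symmetric]]
  from gj(4) obtain P Q where RPA: "R = P * A" and P: "P \<in> carrier_mat nr nr"
    and Q: "Q \<in> carrier_mat nr nr" and QP: "Q * P = 1\<^sub>m nr" by blast
  have R: "R \<in> carrier_mat nr nc" by (rule gj(2))
  from gj(3) obtain f where pf: "pivot_fun R f nc" 
    unfolding row_echelon_form_def using R by auto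
  have dR: "dim_row R = nr" using R by auto
  note pd = pivot_funD[OF dR pf]
  define S where "S = mat nc nr (\<lambda>(j,i). if f i < nc \<and> j = f i then 1 else (0::real))"
  have S: "S \<in> carrier_mat nc nr" unfolding S_def by auto
  have RS: "R * S = mat nr nr (\<lambda>(i',i). if f i < nc \<and> i' = i then 1 else 0)"
  proof (rule eq_matI)
    fix i' i assume i': "i' < dim_row (mat nr nr (\<lambda>(i',i). if f i < nc \<and> i' = i then 1 else (0::real)))"
      and i: "i < dim_col (mat nr nr (\<lambda>(i',i). if f i < nc \<and> i' = i then 1 else (0::real)))"
    hence i': "i' < nr" and i: "i < nr" by auto
    have "(R * S) $$ (i',i) = (\<Sum>j<nc. R $$ (i',j) * S $$ (j,i))"
      using R S i i' by (simp add: scalar_prod_def atLeast0LessThan)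
    also have "\<dots> = (if f i < nc then R $$ (i', f i) else 0)"
    proof (cases "f i < nc")
      case True
      have "(\<Sum>j<nc. R $$ (i',j) * S $$ (j,i)) = (\<Sum>j<nc. if j = f i then R $$ (i',j) else 0)"
        by (rule sum.cong, auto simp: S_def i True)
      also have "\<dots> = R $$ (i', f i)" using True by simp
      finally show ?thesis using True by simp
    next
      case False
      then show ?thesis by (auto simp: S_def i intro!: sum.neutral)
    qed
    also have "\<dots> = (if f i < nc \<and> i' = i then 1 else 0)"
      using pd(4)[OF i] pd(5)[OF i _ i'] R by auto
    finally show "(R * S) $$ (i',i) = mat nr nr (\<lambda>(i',i). if f i < nc \<and> i' = i then 1 else (0::real)) $$ (i',i)"
      using i i' by simp
  qed (insert R S, auto)
  have RSR: "R * S * R = R"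
  proof (rule eq_matI)
    fix i k assume "i < dim_row R" "k < dim_col R"
    hence i: "i < nr" and k: "k < nc" using R by auto
    have "(R * S * R) $$ (i,k) = (\<Sum>i'<nr. (R*S) $$ (i,i') * R $$ (i',k))"
      using R S i k by (simp add: scalar_prod_def atLeast0LessThan del: assoc_mult_mat)
    also have "\<dots> = (\<Sum>i'<nr. if i' = i then (if f i < nc then R $$ (i,k) else 0) else 0)"
      by (rule sum.cong, auto simp: RS i)
    also have "\<dots> = (if f i < nc then R $$ (i,k) else 0)" using i by simp
    also have "\<dots> = R $$ (i,k)"
    proof (cases "f i < nc")
      case False
      hence "f i = nc" using pd(1)[OF i] R by auto
      thus ?thesis using pd(2)[OF i, of k] k R by auto
    qed simp
    finally show "(R * S * R) $$ (i,k) = R $$ (i,k)" .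
  qed (insert R S, auto)
  define G where "G = S * P"
  have G: "G \<in> carrier_mat nc nr" unfolding G_def using S P by auto
  have AQR: "A = Q * R"
  proof -
    have "A = 1\<^sub>m nr * A" using A by simp
    also have "\<dots> = Q * P * A" using QP by simp
    also have "\<dots> = Q * R" unfolding RPA using Q P A by simp
    finally show ?thesis .
  qed
  have "A * G * A = Q * R * (S * P) * A" unfolding G_def using AQR by simp
  also have "\<dots> = Q * (R * (S * (P * A)))"
  proof -
    have "Q * R * (S * P) * A = (Q * R) * ((S * P) * A)"
      by (rule assoc_mult_mat[of _ nr nc _ nr _ nc], insert Q R S P A, auto)
    also have "(S * P) * A = S * (P * A)"
      by (rule assoc_mult_mat[of _ nc nr _ nr _ nc], insert S P A, auto)
    also have "(Q * R) * (S * (P * A)) = Q * (R * (S * (P * A)))"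
      by (rule assoc_mult_mat[of _ nr nr _ nc _ nc], insert Q R S P A, auto)
    finally show ?thesis .
  qed
  also have "\<dots> = Q * (R * S * R)" unfolding RPA[symmetric] using R S by simp
  also have "\<dots> = A" unfolding RSR AQR ..
  finally show ?thesis using G unfolding nc_def nr_def by blast
qed

lemma ginv_spec: "ginv A \<in> carrier_mat (dim_col A) (dim_row A)" "A * ginv A * A = A"
  using someI_ex[OF ginv_exists[of A]] unfolding ginv_def by auto

lemma mat_eq_by_vec:
  fixes A B :: "'a::comm_ring_1 mat"
  assumes A: "A \<in> carrier_mat r c" and B: "B \<in> carrier_mat r c"
    and h: "\<And>x. x \<in> carrier_vec c \<Longrightarrow> A *\<^sub>v x = B *\<^sub>v x"
  shows "A = B"
proof (rule eq_matI)
  fix i j assume i: "i < dim_row B" and j: "j < dim_col B"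
  have "A $$ (i,j) = (A *\<^sub>v unit_vec c j) $ i" using A B i j by simp
  also have "\<dots> = (B *\<^sub>v unit_vec c j) $ i" using h[of "unit_vec c j"] by simp
  also have "\<dots> = B $$ (i,j)" using B i j by simp
  finally show "A $$ (i,j) = B $$ (i,j)" .
qed (insert A B, auto)

lemma self_scalar_nonneg: "0 \<le> (v::real vec) \<bullet> v"
  unfolding scalar_prod_def by (auto intro: sum_nonneg)

lemma self_scalar_zero:
  assumes v: "(v::real vec) \<in> carrier_vec n" and z: "v \<bullet> v = 0"
  shows "v = 0\<^sub>v n"
proof (rule eq_vecI)
  fix i assume i: "i < dim_vec (0\<^sub>v n :: real vec)"
  have "(\<Sum>k\<in>{0..<dim_vec v}. v $ k * v $ k) = 0" using z unfolding scalar_prod_def by simp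
  hence "\<forall>k\<in>{0..<dim_vec v}. v $ k * v $ k = 0"
    by (subst (asm) sum_nonneg_eq_0_iff) auto
  thus "v $ i = 0\<^sub>v n $ i" using i v by auto
qed (insert v, auto)

lemma trans_sc:
  fixes A :: "real mat"
  assumes "A \<in> carrier_mat r c" "x \<in> carrier_vec r" "y \<in> carrier_vec c"
  shows "x \<bullet> (A *\<^sub>v y) = (transpose_mat A *\<^sub>v x) \<bullet> y"
  using transpose_vec_mult_scalar[OF assms(1,3,2)] by simp

lemma mv2: "A \<in> carrier_mat a b \<Longrightarrow> B \<in> carrier_mat b c \<Longrightarrow> x \<in> carrier_vec c \<Longrightarrow>
  (A * B) *\<^sub>v x = A *\<^sub>v (B *\<^sub>v (x :: 'a :: comm_ring_1 vec))"
  by (rule assoc_mult_mat_vec)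

lemma mv3: "A \<in> carrier_mat a b \<Longrightarrow> B \<in> carrier_mat b c \<Longrightarrow> C \<in> carrier_mat c d \<Longrightarrow>
  x \<in> carrier_vec d \<Longrightarrow> (A * B * C) *\<^sub>v x = A *\<^sub>v (B *\<^sub>v (C *\<^sub>v (x :: 'a :: comm_ring_1 vec)))"
  by (subst mv2[of _ a c], auto simp: mv2[of _ b c])

lemma schur_core:
  fixes A B D G :: "real mat"
  assumes A: "A \<in> carrier_mat t t" and B: "B \<in> carrier_mat t s" and D: "D \<in> carrier_mat s s"
    and G: "G \<in> carrier_mat s s" and DGD: "D * G * D = D" and Ds: "transpose_mat D = D"
    and psd: "\<And>x y. x \<in> carrier_vec t \<Longrightarrow> y \<in> carrier_vec s \<Longrightarrow>
        0 \<le> x \<bullet> (A *\<^sub>v x) + 2 * (x \<bullet> (B *\<^sub>v y)) + y \<bullet> (D *\<^sub>v y)"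
  shows "D * (G * transpose_mat B) = transpose_mat B"
    and "transpose_mat (B * G * transpose_mat B) = B * G * transpose_mat B"
    and "\<And>x y. x \<in> carrier_vec t \<Longrightarrow> y \<in> carrier_vec s \<Longrightarrow>
        x \<bullet> ((A - B * G * transpose_mat B) *\<^sub>v x)
          \<le> x \<bullet> (A *\<^sub>v x) + 2 * (x \<bullet> (B *\<^sub>v y)) + y \<bullet> (D *\<^sub>v y)"
    and "\<And>x. x \<in> carrier_vec t \<Longrightarrow>
        x \<bullet> ((A - B * G * transpose_mat B) *\<^sub>v x)
          = x \<bullet> (A *\<^sub>v x) + 2 * (x \<bullet> (B *\<^sub>v (- (G *\<^sub>v (transpose_mat B *\<^sub>v x)))))
            + (- (G *\<^sub>v (transpose_mat B *\<^sub>v x))) \<bullet> (D *\<^sub>v (- (G *\<^sub>v (transpose_mat B *\<^sub>v x))))"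
proof -
  have Bt: "transpose_mat B \<in> carrier_mat s t" using B by simp
  have Gt: "transpose_mat G \<in> carrier_mat s s" using G by simp
  have DGtD: "D * transpose_mat G * D = D"
  proof -
    have "D = transpose_mat (D * G * D)" using DGD Ds by simp
    also have "\<dots> = transpose_mat D * transpose_mat (D * G)"
      by (rule transpose_mult, insert D G, auto)
    also have "transpose_mat (D * G) = transpose_mat G * transpose_mat D"
      by (rule transpose_mult, insert D G, auto)
    finally show ?thesis using D G Gt Ds by (simp add: assoc_mult_mat[of _ s s])
  qed
  have Dpsd: "0 \<le> y \<bullet> (D *\<^sub>v y)" if y: "y \<in> carrier_vec s" for y
    using psd[OF zero_carrier_vec y] A B y by simp
  have ker: "(transpose_mat B *\<^sub>v x) \<bullet> z = 0"
    if x: "x \<in> carrier_vec t" and z: "z \<in> carrier_vec s" and Dz: "D *\<^sub>v z = 0\<^sub>v s" for x z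
  proof (rule ccontr)
    define c where "c = (transpose_mat B *\<^sub>v x) \<bullet> z"
    assume "c \<noteq> 0"
    define lam where "lam = - (x \<bullet> (A *\<^sub>v x) + 1) / (2 * c)"
    have Bz: "B *\<^sub>v (lam \<cdot>\<^sub>v z) = lam \<cdot>\<^sub>v (B *\<^sub>v z)" using B z by (rule mult_mat_vec)
    have Dz': "D *\<^sub>v (lam \<cdot>\<^sub>v z) = lam \<cdot>\<^sub>v (D *\<^sub>v z)" using D z by (rule mult_mat_vec)
    have eq: "x \<bullet> (B *\<^sub>v z) = c" unfolding c_def using trans_sc[OF B x z] .
    have "0 \<le> x \<bullet> (A *\<^sub>v x) + 2 * (x \<bullet> (B *\<^sub>v (lam \<cdot>\<^sub>v z))) + (lam \<cdot>\<^sub>v z) \<bullet> (D *\<^sub>v (lam \<cdot>\<^sub>v z))"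
      using psd[OF x, of "lam \<cdot>\<^sub>v z"] z by simp
    hence "0 \<le> x \<bullet> (A *\<^sub>v x) + 2 * (lam * c)" unfolding Bz Dz' using eq x B z Dz by simp
    also have "\<dots> = -1" unfolding lam_def using \<open>c \<noteq> 0\<close> by (simp add: field_simps)
    finally show False by simp
  qed
  have range: "D *\<^sub>v (G *\<^sub>v v) = v" if x: "x \<in> carrier_vec t" and v: "v = transpose_mat B *\<^sub>v x" for x v
  proof -
    have vc: "v \<in> carrier_vec s" using v Bt x by simp
    define y where "y = v - D *\<^sub>v (G *\<^sub>v v)"
    have yc: "y \<in> carrier_vec s" unfolding y_def using vc D G by simp
    define z where "z = y - transpose_mat G *\<^sub>v (D *\<^sub>v y)"
    have zc: "z \<in> carrier_vec s" unfolding z_def using yc D G by simp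
    have "(D * transpose_mat G * D) *\<^sub>v y = D *\<^sub>v (transpose_mat G *\<^sub>v (D *\<^sub>v y))"
      using D Gt yc by (simp add: assoc_mult_mat_vec[of _ s s _ s])
    hence DGDy: "D *\<^sub>v (transpose_mat G *\<^sub>v (D *\<^sub>v y)) = D *\<^sub>v y" using DGtD by simp
    have "D *\<^sub>v z = D *\<^sub>v y - D *\<^sub>v (transpose_mat G *\<^sub>v (D *\<^sub>v y))"
      unfolding z_def using D Gt yc by (simp add: mult_minus_distrib_mat_vec[of _ s s])
    hence Dz: "D *\<^sub>v z = 0\<^sub>v s" unfolding DGDy using D yc by simp
    have "0 = v \<bullet> z" using ker[OF x zc Dz] v by simp
    also have "\<dots> = v \<bullet> y - v \<bullet> (transpose_mat G *\<^sub>v (D *\<^sub>v y))"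
      unfolding z_def using vc yc D Gt by (simp add: scalar_prod_minus_distrib[of _ s])
    also have "v \<bullet> (transpose_mat G *\<^sub>v (D *\<^sub>v y)) = (G *\<^sub>v v) \<bullet> (D *\<^sub>v y)"
      using trans_sc[OF Gt vc, of "D *\<^sub>v y"] D yc by simp
    also have "\<dots> = (D *\<^sub>v (G *\<^sub>v v)) \<bullet> y"
      using trans_sc[OF D, of "G *\<^sub>v v" y] G vc yc Ds by simp
    also have "v \<bullet> y - (D *\<^sub>v (G *\<^sub>v v)) \<bullet> y = (v - D *\<^sub>v (G *\<^sub>v v)) \<bullet> y"
      by (rule minus_scalar_prod_distrib[symmetric, of _ s], insert vc yc D G, auto)
    also have "\<dots> = y \<bullet> y" unfolding y_def ..
    finally have "y \<bullet> y = 0" by simp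
    hence y0: "y = 0\<^sub>v s" using self_scalar_zero[OF yc] by simp
    show ?thesis
    proof (rule eq_vecI)
      fix i assume i: "i < dim_vec v"
      have "y $ i = 0" using y0 i vc by simp
      thus "(D *\<^sub>v (G *\<^sub>v v)) $ i = v $ i" unfolding y_def using i vc D G by simp
    qed (insert vc D G, auto)
  qed
  show R: "D * (G * transpose_mat B) = transpose_mat B"
  proof (rule mat_eq_by_vec[of _ s t])
    fix x :: "real vec" assume x: "x \<in> carrier_vec t"
    have "D * (G * transpose_mat B) *\<^sub>v x = D *\<^sub>v ((G * transpose_mat B) *\<^sub>v x)"
      using D G Bt x by (intro assoc_mult_mat_vec) auto
    also have "(G * transpose_mat B) *\<^sub>v x = G *\<^sub>v (transpose_mat B *\<^sub>v x)"
      using G Bt x by (intro assoc_mult_mat_vec) auto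
    finally show "D * (G * transpose_mat B) *\<^sub>v x = transpose_mat B *\<^sub>v x"
      using range[OF x refl] by simp
  qed (insert D G Bt, auto)
  have BGD: "B = B * transpose_mat G * D"
  proof -
    have "B = transpose_mat (D * (G * transpose_mat B))" using R by simp
    also have "\<dots> = transpose_mat (G * transpose_mat B) * transpose_mat D"
      by (rule transpose_mult, insert D G Bt, auto)
    also have "transpose_mat (G * transpose_mat B) = B * transpose_mat G"
      using transpose_mult[of G s s "transpose_mat B" t] G Bt by simp
    finally show ?thesis using Ds by simp
  qed
  have BGB: "B * G * transpose_mat B = B * transpose_mat G * transpose_mat B"
  proof -
    have "B * G * transpose_mat B = (B * transpose_mat G * D) * G * transpose_mat B"
      using BGD by simp
    also have "\<dots> = (B * transpose_mat G) * (D * (G * transpose_mat B))"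
    proof -
      have X: "B * transpose_mat G \<in> carrier_mat t s" using B Gt by simp
      have "B * transpose_mat G * D * G * transpose_mat B = (B * transpose_mat G * D) * (G * transpose_mat B)"
        by (rule assoc_mult_mat[of _ t s _ s _ t], insert X D G Bt, auto)
      also have "\<dots> = (B * transpose_mat G) * (D * (G * transpose_mat B))"
        by (rule assoc_mult_mat[of _ t s _ s _ t], insert X D G Bt, auto)
      finally show ?thesis .
    qed
    also have "\<dots> = B * transpose_mat G * transpose_mat B" unfolding R ..
    finally show ?thesis .
  qed
  have "transpose_mat (B * G * transpose_mat B) = transpose_mat (transpose_mat B) * transpose_mat (B * G)"
    by (rule transpose_mult, insert B G Bt, auto)
  also have "transpose_mat (B * G) = transpose_mat G * transpose_mat B"
    by (rule transpose_mult, insert B G, auto)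
  finally show "transpose_mat (B * G * transpose_mat B) = B * G * transpose_mat B"
    unfolding BGB using B G Bt by (simp add: assoc_mult_mat[of _ t s _ s])
  {
    fix x :: "real vec" assume x: "x \<in> carrier_vec t"
    define v where "v = transpose_mat B *\<^sub>v x"
    define w where "w = G *\<^sub>v v"
    have vc: "v \<in> carrier_vec s" unfolding v_def using Bt x by simp
    have wc: "w \<in> carrier_vec s" unfolding w_def using G vc by simp
    have Dw: "D *\<^sub>v w = v" unfolding w_def using range[OF x v_def] .
    have xBy: "x \<bullet> (B *\<^sub>v y) = v \<bullet> y" if y: "y \<in> carrier_vec s" for y
      unfolding v_def using trans_sc[OF B x y] .
    have "(B * G * transpose_mat B) *\<^sub>v x = B *\<^sub>v w"
      unfolding w_def v_def using mv3[OF B G Bt x] .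
    hence qf: "x \<bullet> ((A - B * G * transpose_mat B) *\<^sub>v x) = x \<bullet> (A *\<^sub>v x) - v \<bullet> w"
      using A B G Bt x wc xBy[OF wc]
      by (simp add: minus_mult_distrib_mat_vec[of _ t t] scalar_prod_minus_distrib[of _ t])
    have wDy: "w \<bullet> (D *\<^sub>v y) = v \<bullet> y" if y: "y \<in> carrier_vec s" for y
      using trans_sc[OF D wc y] Ds Dw by simp
    have vw: "w \<bullet> v = v \<bullet> w" using comm_scalar_prod[OF wc vc] .
    show "x \<bullet> ((A - B * G * transpose_mat B) *\<^sub>v x)
          = x \<bullet> (A *\<^sub>v x) + 2 * (x \<bullet> (B *\<^sub>v (- (G *\<^sub>v (transpose_mat B *\<^sub>v x)))))
            + (- (G *\<^sub>v (transpose_mat B *\<^sub>v x))) \<bullet> (D *\<^sub>v (- (G *\<^sub>v (transpose_mat B *\<^sub>v x))))"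
    proof -
      have "G *\<^sub>v (transpose_mat B *\<^sub>v x) = w" unfolding w_def v_def ..
      moreover have "x \<bullet> (B *\<^sub>v (- w)) = - (v \<bullet> w)" using xBy[of "-w"] wc vc by simp
      moreover have "(- w) \<bullet> (D *\<^sub>v (- w)) = w \<bullet> v" proof -
        have "D *\<^sub>v (- w) = - (D *\<^sub>v w)" using D wc by (intro eq_vecI) (auto simp: mult_mat_vec_def)
        thus ?thesis using wc vc Dw D by simp
      qed
      ultimately show ?thesis using qf vw by simp
    qed
    fix y :: "real vec" assume y: "y \<in> carrier_vec s"
    have "0 \<le> (y + w) \<bullet> (D *\<^sub>v (y + w))" using Dpsd[of "y + w"] y wc by simp
    also have "D *\<^sub>v (y + w) = D *\<^sub>v y + v"
      using D y wc Dw by (simp add: mult_add_distrib_mat_vec[of _ s s])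
    also have "(y + w) \<bullet> (D *\<^sub>v y + v) = y \<bullet> (D *\<^sub>v y) + y \<bullet> v + w \<bullet> (D *\<^sub>v y) + w \<bullet> v"
      using y wc vc D by (simp add: add_scalar_prod_distrib[of _ s] scalar_prod_add_distrib[of _ s])
    also have "\<dots> = y \<bullet> (D *\<^sub>v y) + 2 * (v \<bullet> y) + v \<bullet> w"
      using wDy[OF y] vw comm_scalar_prod[OF y vc] by simp
    finally show "x \<bullet> ((A - B * G * transpose_mat B) *\<^sub>v x)
          \<le> x \<bullet> (A *\<^sub>v x) + 2 * (x \<bullet> (B *\<^sub>v y)) + y \<bullet> (D *\<^sub>v y)"
      unfolding qf xBy[OF y] by simp
  }
qed

lemma vec_sub_zero:
  fixes a b :: "'a::ab_group_add vec"
  assumes "a \<in> carrier_vec n" "b \<in> carrier_vec n" "a - b = 0\<^sub>v n"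
  shows "a = b"
proof (rule eq_vecI)
  fix i assume i: "i < dim_vec b"
  have "(a - b) $ i = 0" using assms i by simp
  hence "a $ i - b $ i = 0" using assms(1,2) i by simp
  thus "a $ i = b $ i" by (simp add: right_minus_eq)
qed (insert assms, auto)

lemma gen_proj:
  fixes G H :: "real mat"
  assumes G: "G \<in> carrier_mat m k" and H: "H \<in> carrier_mat k k"
    and KHK: "(transpose_mat G * G) * H * (transpose_mat G * G) = transpose_mat G * G"
    and x: "x \<in> carrier_vec k"
  shows "G *\<^sub>v (H *\<^sub>v (transpose_mat G *\<^sub>v (G *\<^sub>v x))) = G *\<^sub>v x"
proof -
  define K where "K = transpose_mat G * G"
  have K: "K \<in> carrier_mat k k" unfolding K_def using G by simp
  have Kv: "K *\<^sub>v v = transpose_mat G *\<^sub>v (G *\<^sub>v v)" if "v \<in> carrier_vec k" for v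
    unfolding K_def using G that by (intro mv2[of _ k m]) auto
  define u where "u = H *\<^sub>v (K *\<^sub>v x) - x"
  have uc: "u \<in> carrier_vec k" unfolding u_def using H K x by simp
  have "(K * H * K) *\<^sub>v x = K *\<^sub>v (H *\<^sub>v (K *\<^sub>v x))" using mv3[OF K H K x] .
  hence KHKx: "K *\<^sub>v (H *\<^sub>v (K *\<^sub>v x)) = K *\<^sub>v x" using KHK unfolding K_def by simp
  have "K *\<^sub>v u = 0\<^sub>v k"
    unfolding u_def using K H x KHKx by (simp add: mult_minus_distrib_mat_vec[of _ k k])
  hence "(G *\<^sub>v u) \<bullet> (G *\<^sub>v u) = 0"
    using trans_sc[OF G, of "G *\<^sub>v u" u] G uc Kv[OF uc] by simp
  hence "G *\<^sub>v u = 0\<^sub>v m" using self_scalar_zero[of "G *\<^sub>v u" m] G uc by simp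
  hence eq0: "G *\<^sub>v (H *\<^sub>v (K *\<^sub>v x)) - G *\<^sub>v x = 0\<^sub>v m"
    unfolding u_def using G H K x by (simp add: mult_minus_distrib_mat_vec[of _ m k])
  have "G *\<^sub>v (H *\<^sub>v (K *\<^sub>v x)) = G *\<^sub>v x"
    by (rule vec_sub_zero[OF _ _ eq0], insert G H K x, auto)
  thus ?thesis using Kv[OF x] by simp
qed

lemma prperp_nnd:
  fixes G :: "real mat"
  assumes G: "G \<in> carrier_mat m k"
  shows "nnd m (pr_perp G)"
proof -
  define K where "K = transpose_mat G * G"
  have K: "K \<in> carrier_mat k k" unfolding K_def using G by simp
  define H where "H = ginv K"
  have H: "H \<in> carrier_mat k k" unfolding H_def using ginv_spec(1)[of K] K by simp
  have KHK: "K * H * K = K" unfolding H_def by (rule ginv_spec(2))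
  have Ht: "transpose_mat H \<in> carrier_mat k k" using H by simp
  have KHtK: "K * transpose_mat H * K = K"
  proof -
    have Ks: "transpose_mat K = K" unfolding K_def using G by (simp add: transpose_mult[of "transpose_mat G" k m G k])
    have "K = transpose_mat (K * H * K)" using KHK Ks by simp
    also have "\<dots> = transpose_mat K * transpose_mat (K * H)"
      by (rule transpose_mult, insert K H, auto)
    also have "transpose_mat (K * H) = transpose_mat H * transpose_mat K"
      by (rule transpose_mult, insert K H, auto)
    finally show ?thesis using K Ht Ks by (simp add: assoc_mult_mat[of _ k k])
  qed
  define P where "P = G * H * transpose_mat G"
  have Gt: "transpose_mat G \<in> carrier_mat k m" using G by simp
  have P: "P \<in> carrier_mat m m" unfolding P_def using G H by simp
  have Pt: "transpose_mat P = G * transpose_mat H * transpose_mat G"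
  proof -
    have "transpose_mat P = transpose_mat (transpose_mat G) * transpose_mat (G * H)"
      unfolding P_def by (rule transpose_mult, insert G H, auto)
    also have "transpose_mat (G * H) = transpose_mat H * transpose_mat G"
      by (rule transpose_mult, insert G H, auto)
    finally show ?thesis using G Ht Gt by (simp add: assoc_mult_mat[of _ m k])
  qed
  have Pv: "P *\<^sub>v x = G *\<^sub>v (H *\<^sub>v (transpose_mat G *\<^sub>v x))" if "x \<in> carrier_vec m" for x
    unfolding P_def using mv3[OF G H Gt that] .
  have Ptv: "transpose_mat P *\<^sub>v x = G *\<^sub>v (transpose_mat H *\<^sub>v (transpose_mat G *\<^sub>v x))" if "x \<in> carrier_vec m" for x
    unfolding Pt using mv3[OF G Ht Gt that] .
  have PtP: "transpose_mat P *\<^sub>v (P *\<^sub>v x) = P *\<^sub>v x" if x: "x \<in> carrier_vec m" for x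
  proof -
    have yc: "H *\<^sub>v (transpose_mat G *\<^sub>v x) \<in> carrier_vec k" using H Gt x by simp
    show ?thesis unfolding Pv[OF x] using Ptv[of "G *\<^sub>v (H *\<^sub>v (transpose_mat G *\<^sub>v x))"]
        gen_proj[OF G Ht _ yc] KHtK G yc unfolding K_def by simp
  qed
  have PtP_mat: "transpose_mat P * P = P"
    by (rule mat_eq_by_vec[of _ m m], insert P PtP, auto simp: mv2[of _ m m])
  have Psym: "transpose_mat P = P"
  proof -
    have "transpose_mat P = transpose_mat (transpose_mat P * P)" using PtP_mat by simp
    also have "\<dots> = transpose_mat P * P"
      using transpose_mult[of "transpose_mat P" m m P m] P by simp
    finally show ?thesis using PtP_mat by simp
  qed
  have pp: "pr_perp G = 1\<^sub>m m - P" unfolding pr_perp_def P_def H_def K_def using G by simp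
  show ?thesis unfolding nnd_def pp
  proof (intro conjI ballI)
    show "1\<^sub>m m - P \<in> carrier_mat m m" using P by (simp add: minus_carrier_mat)
    show "transpose_mat (1\<^sub>m m - P) = 1\<^sub>m m - P"
      using transpose_minus[of "1\<^sub>m m" m m P] P Psym by simp
    fix x :: "real vec" assume x: "x \<in> carrier_vec m"
    have Pxc: "P *\<^sub>v x \<in> carrier_vec m" using P x by simp
    have PxPx: "(P *\<^sub>v x) \<bullet> (P *\<^sub>v x) = x \<bullet> (P *\<^sub>v x)"
      using trans_sc[OF P x Pxc] PtP[OF x] Psym by simp
    have xPx: "(P *\<^sub>v x) \<bullet> x = x \<bullet> (P *\<^sub>v x)" using comm_scalar_prod[OF Pxc x] .
    have "0 \<le> (x - P *\<^sub>v x) \<bullet> (x - P *\<^sub>v x)" by (rule self_scalar_nonneg)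
    also have "\<dots> = x \<bullet> x - x \<bullet> (P *\<^sub>v x) - (P *\<^sub>v x) \<bullet> x + (P *\<^sub>v x) \<bullet> (P *\<^sub>v x)"
      using x Pxc by (simp add: minus_scalar_prod_distrib[of _ m] scalar_prod_minus_distrib[of _ m])
    also have "\<dots> = x \<bullet> ((1\<^sub>m m - P) *\<^sub>v x)"
      using x P PxPx xPx by (simp add: minus_mult_distrib_mat_vec[of _ m m] scalar_prod_minus_distrib[of _ m])
    finally show "0 \<le> x \<bullet> ((1\<^sub>m m - P) *\<^sub>v x)" .
  qed
qed

lemma congr_nnd:
  fixes A M :: "real mat"
  assumes A: "nnd r A" and M: "M \<in> carrier_mat r N"
  shows "nnd N (transpose_mat M * A * M)"
proof -
  have Ac: "A \<in> carrier_mat r r" and As: "transpose_mat A = A"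
    and Ap: "\<And>x. x \<in> carrier_vec r \<Longrightarrow> 0 \<le> x \<bullet> (A *\<^sub>v x)" using A unfolding nnd_def by auto
  have Mt: "transpose_mat M \<in> carrier_mat N r" using M by simp
  show ?thesis unfolding nnd_def
  proof (intro conjI ballI)
    show "transpose_mat M * A * M \<in> carrier_mat N N" using M Ac by simp
    have "transpose_mat (transpose_mat M * A * M) = transpose_mat M * transpose_mat (transpose_mat M * A)"
      by (rule transpose_mult, insert M Ac, auto)
    also have "transpose_mat (transpose_mat M * A) = transpose_mat A * M"
      using transpose_mult[of "transpose_mat M" N r A r] M Ac by simp
    finally show "transpose_mat (transpose_mat M * A * M) = transpose_mat M * A * M"
      using As M Ac by (simp add: assoc_mult_mat[of _ N r _ r _ N])
    fix x :: "real vec" assume x: "x \<in> carrier_vec N"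
    have "x \<bullet> ((transpose_mat M * A * M) *\<^sub>v x) = x \<bullet> (transpose_mat M *\<^sub>v (A *\<^sub>v (M *\<^sub>v x)))"
      using mv3[OF Mt Ac M x] by simp
    also have "\<dots> = (M *\<^sub>v x) \<bullet> (A *\<^sub>v (M *\<^sub>v x))"
      using trans_sc[OF Mt x, of "A *\<^sub>v (M *\<^sub>v x)"] M Ac x by simp
    finally show "0 \<le> x \<bullet> ((transpose_mat M * A * M) *\<^sub>v x)" using Ap[of "M *\<^sub>v x"] M x by simp
  qed
qed

lemma block_facts:
  fixes Om T F :: "real mat"
  assumes Om: "nnd N Om" and T: "T \<in> carrier_mat N t" and F: "F \<in> carrier_mat N t"
  shows "transpose_mat (transpose_mat T * Om * T) = transpose_mat T * Om * T"
    and "transpose_mat (transpose_mat F * Om * F) = transpose_mat F * Om * F"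
    and "transpose_mat (transpose_mat T * Om * F) = transpose_mat F * Om * T"
    and "\<And>x y. x \<in> carrier_vec t \<Longrightarrow> y \<in> carrier_vec t \<Longrightarrow>
        0 \<le> x \<bullet> ((transpose_mat T * Om * T) *\<^sub>v x) + 2 * (x \<bullet> ((transpose_mat T * Om * F) *\<^sub>v y))
           + y \<bullet> ((transpose_mat F * Om * F) *\<^sub>v y)"
proof -
  have Oc: "Om \<in> carrier_mat N N" and Os: "transpose_mat Om = Om"
    and Op: "\<And>x. x \<in> carrier_vec N \<Longrightarrow> 0 \<le> x \<bullet> (Om *\<^sub>v x)" using Om unfolding nnd_def by auto
  have Tt: "transpose_mat T \<in> carrier_mat t N" using T by simp
  have Ft: "transpose_mat F \<in> carrier_mat t N" using F by simp
  have tr: "transpose_mat (transpose_mat X * Om * Y) = transpose_mat Y * Om * X"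
    if X: "X \<in> carrier_mat N t" and Y: "Y \<in> carrier_mat N t" for X Y
  proof -
    have "transpose_mat (transpose_mat X * Om * Y) = transpose_mat Y * transpose_mat (transpose_mat X * Om)"
      by (rule transpose_mult, insert X Y Oc, auto)
    also have "transpose_mat (transpose_mat X * Om) = transpose_mat Om * X"
      using transpose_mult[of "transpose_mat X" t N Om N] X Oc by simp
    finally show ?thesis using Os X Y Oc by (simp add: assoc_mult_mat[of _ t N _ N _ t])
  qed
  show "transpose_mat (transpose_mat T * Om * T) = transpose_mat T * Om * T" using tr[OF T T] .
  show "transpose_mat (transpose_mat F * Om * F) = transpose_mat F * Om * F" using tr[OF F F] .
  show "transpose_mat (transpose_mat T * Om * F) = transpose_mat F * Om * T" using tr[OF T F] .
  fix x y :: "real vec" assume x: "x \<in> carrier_vec t" and y: "y \<in> carrier_vec t"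
  have bil: "u \<bullet> ((transpose_mat X * Om * Y) *\<^sub>v v) = (X *\<^sub>v u) \<bullet> (Om *\<^sub>v (Y *\<^sub>v v))"
    if X: "X \<in> carrier_mat N t" and Y: "Y \<in> carrier_mat N t" and u: "u \<in> carrier_vec t"
      and v: "v \<in> carrier_vec t" for X Y u v
  proof -
    have "(transpose_mat X * Om * Y) *\<^sub>v v = transpose_mat X *\<^sub>v (Om *\<^sub>v (Y *\<^sub>v v))"
      by (rule mv3, insert X Y Oc v, auto)
    moreover have "u \<bullet> (transpose_mat X *\<^sub>v (Om *\<^sub>v (Y *\<^sub>v v))) = (X *\<^sub>v u) \<bullet> (Om *\<^sub>v (Y *\<^sub>v v))"
      using trans_sc[of "transpose_mat X" t N u "Om *\<^sub>v (Y *\<^sub>v v)"] X Y Oc u v by simp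
    ultimately show ?thesis by simp
  qed
  define a where "a = T *\<^sub>v x"
  define b where "b = F *\<^sub>v y"
  have ac: "a \<in> carrier_vec N" unfolding a_def using T x by simp
  have bc: "b \<in> carrier_vec N" unfolding b_def using F y by simp
  have ba: "b \<bullet> (Om *\<^sub>v a) = a \<bullet> (Om *\<^sub>v b)"
  proof -
    have "b \<bullet> (Om *\<^sub>v a) = (transpose_mat Om *\<^sub>v b) \<bullet> a" using trans_sc[OF Oc bc ac] .
    also have "\<dots> = a \<bullet> (Om *\<^sub>v b)" using Os comm_scalar_prod[of "Om *\<^sub>v b" N a] Oc bc ac by simp
    finally show ?thesis .
  qed
  have "0 \<le> (a + b) \<bullet> (Om *\<^sub>v (a + b))" using Op[of "a + b"] ac bc by simp
  also have "\<dots> = a \<bullet> (Om *\<^sub>v a) + a \<bullet> (Om *\<^sub>v b) + b \<bullet> (Om *\<^sub>v a) + b \<bullet> (Om *\<^sub>v b)"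
    using ac bc Oc by (simp add: mult_add_distrib_mat_vec[of _ N N] add_scalar_prod_distrib[of _ N]
        scalar_prod_add_distrib[of _ N])
  also have "\<dots> = x \<bullet> ((transpose_mat T * Om * T) *\<^sub>v x) + 2 * (x \<bullet> ((transpose_mat T * Om * F) *\<^sub>v y))
           + y \<bullet> ((transpose_mat F * Om * F) *\<^sub>v y)"
    unfolding bil[OF T T x x] bil[OF T F x y] bil[OF F F y y] a_def[symmetric] b_def[symmetric] ba by simp
  finally show "0 \<le> x \<bullet> ((transpose_mat T * Om * T) *\<^sub>v x) + 2 * (x \<bullet> ((transpose_mat T * Om * F) *\<^sub>v y))
           + y \<bullet> ((transpose_mat F * Om * F) *\<^sub>v y)" .
qed

lemma Tmat_carrier: "Tmat p t n d \<in> carrier_mat (n*p) t" unfolding Tmat_def by simp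
lemma Fmat_carrier: "Fmat p t n d \<in> carrier_mat (n*p) t" unfolding Fmat_def by simp

lemma Omat_nnd: "nnd (n*p) (Omat p n l)"
proof -
  define M where "M = Mmat p n l"
  define r where "r = (\<Sum>u<n. l (Suc u))"
  have M: "M \<in> carrier_mat r (n*p)" unfolding M_def Mmat_def r_def by simp
  define G where "G = col_concat (M * Zmat p n) (M * Umat p n)"
  have G: "G \<in> carrier_mat r (dim_col G)" unfolding G_def col_concat_def using M by simp
  have "nnd r (pr_perp G)" by (rule prperp_nnd[OF G])
  from congr_nnd[OF this M] show ?thesis unfolding Omat_def M_def[symmetric] G_def .
qed

lemma cinfo_facts:
  fixes p t n d l
  defines "A \<equiv> C11 p t n d l" and "B \<equiv> C12 p t n d l" and "D \<equiv> C22 p t n d l"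
  shows "A \<in> carrier_mat t t" "B \<in> carrier_mat t t" "D \<in> carrier_mat t t"
    and "transpose_mat A = A" "transpose_mat D = D" "C21 p t n d l = transpose_mat B"
    and "\<And>x y. x \<in> carrier_vec t \<Longrightarrow> y \<in> carrier_vec t \<Longrightarrow>
        0 \<le> x \<bullet> (A *\<^sub>v x) + 2 * (x \<bullet> (B *\<^sub>v y)) + y \<bullet> (D *\<^sub>v y)"
    and "Cinfo p t n d l = A - B * ginv D * transpose_mat B"
proof -
  note O = Omat_nnd[of n p l]
  have Oc: "Omat p n l \<in> carrier_mat (n*p) (n*p)" using O unfolding nnd_def by auto
  note bf = block_facts[OF O Tmat_carrier[of p t n d] Fmat_carrier[of p t n d]]
  show "A \<in> carrier_mat t t" "B \<in> carrier_mat t t" "D \<in> carrier_mat t t"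
    unfolding A_def B_def D_def C11_def C12_def C22_def using Oc Tmat_carrier[of p t n d] Fmat_carrier[of p t n d]
    by auto
  show "transpose_mat A = A" unfolding A_def C11_def using bf(1) .
  show "transpose_mat D = D" unfolding D_def C22_def using bf(2) .
  show "C21 p t n d l = transpose_mat B" unfolding B_def C12_def C21_def using bf(3) by simp
  show "\<And>x y. x \<in> carrier_vec t \<Longrightarrow> y \<in> carrier_vec t \<Longrightarrow>
        0 \<le> x \<bullet> (A *\<^sub>v x) + 2 * (x \<bullet> (B *\<^sub>v y)) + y \<bullet> (D *\<^sub>v y)"
    unfolding A_def B_def D_def C11_def C12_def C22_def by (rule bf(4))
  show "Cinfo p t n d l = A - B * ginv D * transpose_mat B"
    unfolding Cinfo_def A_def B_def D_def using bf(3) unfolding C12_def C21_def by simp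
qed

lemma qf_sum:
  fixes A :: "real mat"
  assumes A: "A \<in> carrier_mat m k" and x: "x \<in> carrier_vec m" and y: "y \<in> carrier_vec k"
  shows "x \<bullet> (A *\<^sub>v y) = (\<Sum>i<m. \<Sum>j<k. x $ i * A $$ (i,j) * y $ j)"
proof -
  have "x \<bullet> (A *\<^sub>v y) = (\<Sum>i<m. x $ i * (A *\<^sub>v y) $ i)"
    unfolding scalar_prod_def using A by (simp add: atLeast0LessThan)
  also have "\<dots> = (\<Sum>i<m. x $ i * (\<Sum>j<k. A $$ (i,j) * y $ j))"
    by (rule sum.cong, insert A y, auto simp: scalar_prod_def atLeast0LessThan)
  also have "\<dots> = (\<Sum>i<m. \<Sum>j<k. x $ i * A $$ (i,j) * y $ j)"
    by (simp add: sum_distrib_left mult.assoc)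
  finally show ?thesis .
qed

lemma finite_dropouts: "finite (dropouts p n)"
  unfolding dropouts_def by (rule finite_PiE) auto

lemma Emat_carrier: "Emat p n m a C \<in> carrier_mat m m" unfolding Emat_def by simp

lemma Emat_qf:
  assumes C: "\<And>l. C l \<in> carrier_mat m m" and x: "x \<in> carrier_vec m" and y: "y \<in> carrier_vec m"
  shows "x \<bullet> (Emat p n m a C *\<^sub>v y) = (\<Sum>l\<in>dropouts p n. dprob n a l * (x \<bullet> (C l *\<^sub>v y)))"
proof -
  let ?W = "dropouts p n"
  have "x \<bullet> (Emat p n m a C *\<^sub>v y) = (\<Sum>i<m. \<Sum>j<m. x $ i * Emat p n m a C $$ (i,j) * y $ j)"
    by (rule qf_sum[OF Emat_carrier x y])
  also have "\<dots> = (\<Sum>i<m. \<Sum>j<m. \<Sum>l\<in>?W. dprob n a l * (x $ i * C l $$ (i,j) * y $ j))"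
    unfolding Emat_def by (intro sum.cong refl) (simp add: sum_distrib_left sum_distrib_right mult_ac)
  also have "\<dots> = (\<Sum>i<m. \<Sum>l\<in>?W. \<Sum>j<m. dprob n a l * (x $ i * C l $$ (i,j) * y $ j))"
    by (intro sum.cong refl, rule sum.swap)
  also have "\<dots> = (\<Sum>l\<in>?W. \<Sum>i<m. \<Sum>j<m. dprob n a l * (x $ i * C l $$ (i,j) * y $ j))"
    by (rule sum.swap)
  also have "\<dots> = (\<Sum>l\<in>?W. dprob n a l * (x \<bullet> (C l *\<^sub>v y)))"
    by (intro sum.cong refl, subst qf_sum[OF C x y]) (simp add: sum_distrib_left)
  finally show ?thesis .
qed

lemma Emat_transpose:
  assumes C: "\<And>l. C l \<in> carrier_mat m m"
  shows "transpose_mat (Emat p n m a C) = Emat p n m a (\<lambda>l. transpose_mat (C l))"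
proof (rule eq_matI)
  fix i j assume "i < dim_row (Emat p n m a (\<lambda>l. transpose_mat (C l)))"
    "j < dim_col (Emat p n m a (\<lambda>l. transpose_mat (C l)))"
  hence i: "i < m" and j: "j < m" unfolding Emat_def by auto
  have "transpose_mat (C l) $$ (i,j) = C l $$ (j,i)" for l
    by (subst index_transpose_mat(1)) (insert C[of l] i j, auto)
  thus "transpose_mat (Emat p n m a C) $$ (i,j) = Emat p n m a (\<lambda>l. transpose_mat (C l)) $$ (i,j)"
    unfolding Emat_def using i j by simp
qed (auto simp: Emat_def)

lemma dprob_nonneg:
  assumes "is_dropout_dist p a" and "l \<in> dropouts p n"
  shows "0 \<le> dprob n a l"
  using assms unfolding dprob_def dropouts_def is_dropout_dist_def
  by (auto intro!: prod_nonneg simp: PiE_def Pi_def)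

lemma dprob_sum:
  assumes "is_dropout_dist p a"
  shows "(\<Sum>l\<in>dropouts p n. dprob n a l) = 1"
proof -
  have "(\<Prod>u\<in>{1..n}. \<Sum>k\<in>{1..p}. a k) = (\<Sum>g\<in>PiE {1..n} (\<lambda>_. {1..p}). \<Prod>u\<in>{1..n}. a (g u))"
    by (rule prod_sum_PiE) auto
  moreover have "(\<Prod>u\<in>{1..n}. \<Sum>k\<in>{1..p}. a k) = 1"
    using assms unfolding is_dropout_dist_def by simp
  ultimately show ?thesis unfolding dropouts_def dprob_def by simp
qed

definition mixm :: "nat \<Rightarrow> 'b set \<Rightarrow> ('b \<Rightarrow> real) \<Rightarrow> ('b \<Rightarrow> real mat) \<Rightarrow> real mat" where
  "mixm m S w C = mat m m (\<lambda>(i,j). \<Sum>l\<in>S. w l * C l $$ (i,j))"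

lemma Emat_mixm: "Emat p n m a C = mixm m (dropouts p n) (dprob n a) C"
  unfolding Emat_def mixm_def ..

lemma mixm_qf:
  assumes C: "\<And>l. l \<in> S \<Longrightarrow> C l \<in> carrier_mat m m" and x: "x \<in> carrier_vec m" and y: "y \<in> carrier_vec m"
  shows "x \<bullet> (mixm m S w C *\<^sub>v y) = (\<Sum>l\<in>S. w l * (x \<bullet> (C l *\<^sub>v y)))"
proof -
  have Mc: "mixm m S w C \<in> carrier_mat m m" unfolding mixm_def by simp
  have "x \<bullet> (mixm m S w C *\<^sub>v y) = (\<Sum>i<m. \<Sum>j<m. x $ i * mixm m S w C $$ (i,j) * y $ j)"
    by (rule qf_sum[OF Mc x y])
  also have "\<dots> = (\<Sum>i<m. \<Sum>j<m. \<Sum>l\<in>S. w l * (x $ i * C l $$ (i,j) * y $ j))"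
    unfolding mixm_def by (intro sum.cong refl) (simp add: sum_distrib_left sum_distrib_right mult_ac)
  also have "\<dots> = (\<Sum>i<m. \<Sum>l\<in>S. \<Sum>j<m. w l * (x $ i * C l $$ (i,j) * y $ j))"
    by (intro sum.cong refl, rule sum.swap)
  also have "\<dots> = (\<Sum>l\<in>S. \<Sum>i<m. \<Sum>j<m. w l * (x $ i * C l $$ (i,j) * y $ j))"
    by (rule sum.swap)
  also have "\<dots> = (\<Sum>l\<in>S. w l * (x \<bullet> (C l *\<^sub>v y)))"
  proof (intro sum.cong refl)
    fix l assume l: "l \<in> S"
    show "(\<Sum>i<m. \<Sum>j<m. w l * (x $ i * C l $$ (i,j) * y $ j)) = w l * (x \<bullet> (C l *\<^sub>v y))"
      by (subst qf_sum[OF C[OF l] x y]) (simp add: sum_distrib_left)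
  qed
  finally show ?thesis .
qed

lemma nnd_sym_entry: "nnd t A \<Longrightarrow> i < t \<Longrightarrow> j < t \<Longrightarrow> A $$ (j,i) = A $$ (i,j)"
  unfolding nnd_def by (metis carrier_matD(1) carrier_matD(2) index_transpose_mat(1))

lemma mixm_nnd:
  assumes w: "\<And>l. l \<in> S \<Longrightarrow> 0 \<le> w l" and C: "\<And>l. l \<in> S \<Longrightarrow> nnd t (C l)"
  shows "nnd t (mixm t S w C)"
  unfolding nnd_def
proof (intro conjI ballI)
  show "mixm t S w C \<in> carrier_mat t t" unfolding mixm_def by simp
  show "transpose_mat (mixm t S w C) = mixm t S w C"
  proof (rule eq_matI)
    fix i j assume "i < dim_row (mixm t S w C)" "j < dim_col (mixm t S w C)"
    hence i: "i < t" and j: "j < t" unfolding mixm_def by auto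
    show "transpose_mat (mixm t S w C) $$ (i, j) = mixm t S w C $$ (i, j)"
    proof -
      have sym: "C l $$ (j,i) = C l $$ (i,j)" if l: "l \<in> S" for l
        using nnd_sym_entry[of t "C l" i j] C[OF l] i j by blast
      show ?thesis unfolding mixm_def using i j sym by (auto intro!: sum.cong)
    qed
  qed (auto simp: mixm_def)
  fix x :: "real vec" assume x: "x \<in> carrier_vec t"
  have Cc: "\<And>l. l \<in> S \<Longrightarrow> C l \<in> carrier_mat t t" using C unfolding nnd_def by auto
  have "x \<bullet> (mixm t S w C *\<^sub>v x) = (\<Sum>l\<in>S. w l * (x \<bullet> (C l *\<^sub>v x)))"
    by (rule mixm_qf[OF _ x x], rule Cc)
  moreover have "0 \<le> (\<Sum>l\<in>S. w l * (x \<bullet> (C l *\<^sub>v x)))"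
    using w C x unfolding nnd_def by (auto intro!: sum_nonneg)
  ultimately show "0 \<le> x \<bullet> (mixm t S w C *\<^sub>v x)" by simp
qed

lemma jensen:
  assumes crit: "is_criterion t \<Phi>" and fin: "finite S"
  shows "(\<forall>l\<in>S. 0 \<le> w l) \<longrightarrow> sum w S = 1 \<longrightarrow> (\<forall>l\<in>S. nnd t (C l)) \<longrightarrow>
     (\<Sum>l\<in>S. w l * \<Phi> (C l)) \<le> \<Phi> (mixm t S w C)"
  using fin
proof (induction S arbitrary: w rule: finite_induct)
  case empty
  then show ?case by simp
next
  case (insert x F)
  show ?case
  proof (intro impI)
    assume w: "\<forall>l\<in>insert x F. 0 \<le> w l" and s1: "sum w (insert x F) = 1"
      and C: "\<forall>l\<in>insert x F. nnd t (C l)"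
    define s where "s = sum w F"
    have ws: "w x + s = 1" using s1 insert(1,2) unfolding s_def by simp
    have s0: "0 \<le> s" unfolding s_def using w by (auto intro!: sum_nonneg)
    have wx: "0 \<le> w x" using w by simp
    have Cx: "C x \<in> carrier_mat t t" using C unfolding nnd_def by auto
    show "(\<Sum>l\<in>insert x F. w l * \<Phi> (C l)) \<le> \<Phi> (mixm t (insert x F) w C)"
    proof (cases "s = 0")
      case True
      have wF: "\<forall>l\<in>F. w l = 0" using True w insert(1) unfolding s_def
        by (subst (asm) sum_nonneg_eq_0_iff) auto
      have wx1: "w x = 1" using ws True by simp
      have "mixm t (insert x F) w C = C x"
        by (rule eq_matI, insert Cx wF wx1 insert(1,2), auto simp: mixm_def)
      thus ?thesis using wF wx1 insert(1,2) by simp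
    next
      case False
      hence sp: "0 < s" using s0 by simp
      define w' where "w' = (\<lambda>l. w l / s)"
      have IH: "(\<Sum>l\<in>F. w' l * \<Phi> (C l)) \<le> \<Phi> (mixm t F w' C)"
        using insert(3)[of w'] w C sp unfolding w'_def s_def
        by (simp add: sum_divide_distrib[symmetric])
      have MF: "nnd t (mixm t F w' C)"
        by (rule mixm_nnd, insert w C sp, auto simp: w'_def)
      have "(\<Sum>l\<in>insert x F. w l * \<Phi> (C l)) = w x * \<Phi> (C x) + s * (\<Sum>l\<in>F. w' l * \<Phi> (C l))"
        using insert(1,2) sp unfolding w'_def s_def by (simp add: sum_distrib_left)
      also have "\<dots> \<le> w x * \<Phi> (C x) + (1 - w x) * \<Phi> (mixm t F w' C)"
      proof -
        have "1 - w x = s" using ws by simp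
        thus ?thesis using mult_left_mono[OF IH] sp by simp
      qed
      also have "\<dots> \<le> \<Phi> (w x \<cdot>\<^sub>m C x + (1 - w x) \<cdot>\<^sub>m mixm t F w' C)"
        using crit C MF wx ws s0 unfolding is_criterion_def by auto
      also have "w x \<cdot>\<^sub>m C x + (1 - w x) \<cdot>\<^sub>m mixm t F w' C = mixm t (insert x F) w C"
      proof (rule eq_matI)
        fix i j assume "i < dim_row (mixm t (insert x F) w C)" "j < dim_col (mixm t (insert x F) w C)"
        hence i: "i < t" and j: "j < t" unfolding mixm_def by auto
        have "(1 - w x) * (\<Sum>l\<in>F. w' l * C l $$ (i,j)) = (\<Sum>l\<in>F. w l * C l $$ (i,j))"
        proof -
          have "1 - w x = s" using ws by simp
          thus ?thesis unfolding w'_def sum_distrib_left using sp by (intro sum.cong) auto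
        qed
        thus "(w x \<cdot>\<^sub>m C x + (1 - w x) \<cdot>\<^sub>m mixm t F w' C) $$ (i,j) = mixm t (insert x F) w C $$ (i,j)"
          using i j Cx insert(1,2) by (simp add: mixm_def)
      qed (insert Cx, auto simp: mixm_def)
      finally show ?thesis .
    qed
  qed
qed

lemma smult_mv: "A \<in> carrier_mat m m \<Longrightarrow> x \<in> carrier_vec m \<Longrightarrow> (c \<cdot>\<^sub>m A) *\<^sub>v x = c \<cdot>\<^sub>v (A *\<^sub>v (x :: real vec))"
  by (rule eq_vecI) (auto simp: scalar_prod_def sum_distrib_left mult.assoc)

lemma nnd_add: assumes "nnd t A" "nnd t B" shows "nnd t (A + B)"
  using assms unfolding nnd_def
  by (auto simp: transpose_add add_mult_distrib_mat_vec[of _ t t] scalar_prod_add_distrib[of _ t])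

lemma nnd_smult: assumes "nnd t A" "0 \<le> c" shows "nnd t (c \<cdot>\<^sub>m A)"
proof -
  have "transpose_mat (c \<cdot>\<^sub>m A) = c \<cdot>\<^sub>m transpose_mat A" by (rule eq_matI) auto
  thus ?thesis using assms unfolding nnd_def by (auto simp: smult_mv)
qed

lemma crit_mono:
  assumes crit: "is_criterion t \<Phi>" and nonneg: "\<forall>C. nnd t C \<longrightarrow> 0 \<le> \<Phi> C"
    and X: "nnd t X" and Dl: "nnd t Dl"
  shows "\<Phi> X \<le> \<Phi> (X + Dl)"
proof (rule ccontr)
  assume ng: "\<not> \<Phi> X \<le> \<Phi> (X + Dl)"
  define g where "g = \<Phi> X - \<Phi> (X + Dl)"
  have g: "0 < g" using ng unfolding g_def by simp
  have PX: "0 \<le> \<Phi> X" using nonneg X by simp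
  define s where "s = \<Phi> X / g + 1"
  have s1: "1 \<le> s" unfolding s_def using PX g by simp
  have sg: "\<Phi> X < g * s" unfolding s_def using g by (simp add: field_simps)
  define Y where "Y = X + s \<cdot>\<^sub>m Dl"
  have Y: "nnd t Y" unfolding Y_def using nnd_add[OF X nnd_smult[OF Dl]] s1 by simp
  have Xc: "X \<in> carrier_mat t t" and Dc: "Dl \<in> carrier_mat t t" using X Dl unfolding nnd_def by auto
  have eq: "(1/s) \<cdot>\<^sub>m Y + (1 - 1/s) \<cdot>\<^sub>m X = X + Dl"
    by (rule eq_matI, insert Xc Dc s1, auto simp: Y_def field_simps)
  have "(1/s) * \<Phi> Y + (1 - 1/s) * \<Phi> X \<le> \<Phi> ((1/s) \<cdot>\<^sub>m Y + (1 - 1/s) \<cdot>\<^sub>m X)"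
  proof -
    have c: "\<forall>A B w. nnd t A \<longrightarrow> nnd t B \<longrightarrow> 0 \<le> w \<longrightarrow> w \<le> 1 \<longrightarrow>
        w * \<Phi> A + (1 - w) * \<Phi> B \<le> \<Phi> (w \<cdot>\<^sub>m A + (1 - w) \<cdot>\<^sub>m B)"
      using crit unfolding is_criterion_def by blast
    have "0 \<le> 1/s" "1/s \<le> 1" using s1 by auto
    thus ?thesis using c Y X by blast
  qed
  hence "(1/s) * \<Phi> Y + (1 - 1/s) * \<Phi> X \<le> \<Phi> X - g" unfolding eq g_def by simp
  moreover have "0 \<le> (1/s) * \<Phi> Y" using nonneg Y s1 by simp
  ultimately have "(1 - 1/s) * \<Phi> X \<le> \<Phi> X - g" by linarith
  hence "g \<le> \<Phi> X / s" by (simp add: algebra_simps)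
  hence "g * s \<le> \<Phi> X" using s1 by (simp add: field_simps)
  thus False using sg by simp
qed

lemma schur_nnd:
  fixes A B D G :: "real mat"
  assumes A: "A \<in> carrier_mat t t" and B: "B \<in> carrier_mat t s" and D: "D \<in> carrier_mat s s"
    and G: "G \<in> carrier_mat s s" and DGD: "D * G * D = D" and Ds: "transpose_mat D = D"
    and As: "transpose_mat A = A"
    and psd: "\<And>x y. x \<in> carrier_vec t \<Longrightarrow> y \<in> carrier_vec s \<Longrightarrow>
        0 \<le> x \<bullet> (A *\<^sub>v x) + 2 * (x \<bullet> (B *\<^sub>v y)) + y \<bullet> (D *\<^sub>v y)"
  shows "nnd t (A - B * G * transpose_mat B)"
proof -
  have BGB: "B * G * transpose_mat B \<in> carrier_mat t t" using B G by simp
  show ?thesis unfolding nnd_def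
  proof (intro conjI ballI)
    show "A - B * G * transpose_mat B \<in> carrier_mat t t" using A BGB by (simp add: minus_carrier_mat)
    show "transpose_mat (A - B * G * transpose_mat B) = A - B * G * transpose_mat B"
      using transpose_minus[OF A BGB] As schur_core(2)[OF A B D G DGD Ds psd] by simp
    fix x :: "real vec" assume x: "x \<in> carrier_vec t"
    have yc: "- (G *\<^sub>v (transpose_mat B *\<^sub>v x)) \<in> carrier_vec s" using G B x by simp
    show "0 \<le> x \<bullet> ((A - B * G * transpose_mat B) *\<^sub>v x)"
      using schur_core(4)[OF A B D G DGD Ds psd x] psd[OF x yc] by simp
  qed
qed

abbreviation Qf where
  "Qf A B D x y \<equiv> x \<bullet> (A *\<^sub>v x) + 2 * (x \<bullet> (B *\<^sub>v y)) + y \<bullet> (D *\<^sub>v (y :: real vec))"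

lemma Cinfo_props:
  shows "nnd t (Cinfo p t n d l)"
    and "\<And>x y. x \<in> carrier_vec t \<Longrightarrow> y \<in> carrier_vec t \<Longrightarrow>
      x \<bullet> (Cinfo p t n d l *\<^sub>v x) \<le> Qf (C11 p t n d l) (C12 p t n d l) (C22 p t n d l) x y"
proof -
  note cf = cinfo_facts[where p=p and t=t and n=n and d=d and l=l]
  have G: "ginv (C22 p t n d l) \<in> carrier_mat t t" using ginv_spec(1)[of "C22 p t n d l"] cf(3) by simp
  note DGD = ginv_spec(2)[of "C22 p t n d l"]
  show "nnd t (Cinfo p t n d l)" unfolding cf(8)
    by (rule schur_nnd[OF cf(1,2,3) G DGD cf(5,4,7)])
  fix x y :: "real vec" assume x: "x \<in> carrier_vec t" and y: "y \<in> carrier_vec t"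
  show "x \<bullet> (Cinfo p t n d l *\<^sub>v x) \<le> Qf (C11 p t n d l) (C12 p t n d l) (C22 p t n d l) x y"
    unfolding cf(8) by (rule schur_core(3)[OF cf(1,2,3) G DGD cf(5,7) x y])
qed

lemma main_ineq:
  assumes dist: "is_dropout_dist p a" and crit: "is_criterion t \<Phi>"
    and nonneg: "\<forall>C. nnd t C \<longrightarrow> 0 \<le> \<Phi> C"
  shows "phi0 p t n a \<Phi> d \<le> phi1 p t n a \<Phi> d"
proof -
  let ?W = "dropouts p n" and ?w = "dprob n a"
  let ?C11 = "C11 p t n d" and ?C12 = "C12 p t n d" and ?C22 = "C22 p t n d" and ?C21 = "C21 p t n d"
  define EA where "EA = Emat p n t a ?C11"
  define EB where "EB = Emat p n t a ?C12"
  define ED where "ED = Emat p n t a ?C22"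
  define EC where "EC = Emat p n t a (Cinfo p t n d)"
  have c11: "\<And>l. ?C11 l \<in> carrier_mat t t" and c12: "\<And>l. ?C12 l \<in> carrier_mat t t"
    and c22: "\<And>l. ?C22 l \<in> carrier_mat t t" using cinfo_facts by auto
  have cI: "\<And>l. Cinfo p t n d l \<in> carrier_mat t t" using Cinfo_props(1) unfolding nnd_def by auto
  have EAc: "EA \<in> carrier_mat t t" and EBc: "EB \<in> carrier_mat t t" and EDc: "ED \<in> carrier_mat t t"
    and ECc: "EC \<in> carrier_mat t t"
    unfolding EA_def EB_def ED_def EC_def by (rule Emat_carrier)+
  have s11: "\<And>l. transpose_mat (?C11 l) = ?C11 l" using cinfo_facts(4) by simp
  have s22: "\<And>l. transpose_mat (?C22 l) = ?C22 l" using cinfo_facts(5) by simp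
  have t21: "\<And>l. transpose_mat (?C12 l) = ?C21 l" using cinfo_facts(6) by simp
  have EAs: "transpose_mat EA = EA" unfolding EA_def Emat_transpose[OF c11] s11 ..
  have EDs: "transpose_mat ED = ED" unfolding ED_def Emat_transpose[OF c22] s22 ..
  have EBt: "Emat p n t a ?C21 = transpose_mat EB" unfolding EB_def Emat_transpose[OF c12] t21 ..
  have QE: "Qf EA EB ED x y = (\<Sum>l\<in>?W. ?w l * Qf (?C11 l) (?C12 l) (?C22 l) x y)"
    if x: "x \<in> carrier_vec t" and y: "y \<in> carrier_vec t" for x y
    unfolding EA_def EB_def ED_def Emat_qf[OF c11 x x] Emat_qf[OF c12 x y] Emat_qf[OF c22 y y]
    by (simp add: sum.distrib sum_distrib_left algebra_simps)
  have psdE: "0 \<le> Qf EA EB ED x y" if x: "x \<in> carrier_vec t" and y: "y \<in> carrier_vec t" for x y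
    unfolding QE[OF x y]
    by (rule sum_nonneg, rule mult_nonneg_nonneg, rule dprob_nonneg[OF dist], simp,
        rule cinfo_facts(7)[OF x y])
  have GE: "ginv ED \<in> carrier_mat t t" using ginv_spec(1)[of ED] EDc by simp
  note DGD = ginv_spec(2)[of ED]
  have Cbar_eq: "Cbar p t n a d = EA - EB * ginv ED * transpose_mat EB"
    unfolding Cbar_def EA_def[symmetric] EB_def[symmetric] ED_def[symmetric] EBt ..
  have Cbar_nnd: "nnd t (Cbar p t n a d)" unfolding Cbar_eq
    by (rule schur_nnd[OF EAc EBc EDc GE DGD EDs EAs psdE])
  have EC_mix: "EC = mixm t ?W ?w (Cinfo p t n d)" unfolding EC_def Emat_mixm ..
  have EC_nnd: "nnd t EC" unfolding EC_mix
    by (rule mixm_nnd, rule dprob_nonneg[OF dist], simp, rule Cinfo_props(1))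
  define Dl where "Dl = Cbar p t n a d - EC"
  have Cbc: "Cbar p t n a d \<in> carrier_mat t t" using Cbar_nnd unfolding nnd_def by auto
  have Dl_nnd: "nnd t Dl" unfolding nnd_def
  proof (intro conjI ballI)
    show "Dl \<in> carrier_mat t t" unfolding Dl_def using Cbc ECc by (simp add: minus_carrier_mat)
    show "transpose_mat Dl = Dl" unfolding Dl_def using transpose_minus[OF Cbc ECc] Cbar_nnd EC_nnd
      unfolding nnd_def by simp
    fix x :: "real vec" assume x: "x \<in> carrier_vec t"
    define y0 where "y0 = - (ginv ED *\<^sub>v (transpose_mat EB *\<^sub>v x))"
    have y0: "y0 \<in> carrier_vec t" unfolding y0_def using GE EBc x by simp
    have "x \<bullet> (Cbar p t n a d *\<^sub>v x) = Qf EA EB ED x y0"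
      unfolding Cbar_eq y0_def by (rule schur_core(4)[OF EAc EBc EDc GE DGD EDs psdE x])
    also have "\<dots> = (\<Sum>l\<in>?W. ?w l * Qf (?C11 l) (?C12 l) (?C22 l) x y0)" by (rule QE[OF x y0])
    finally have e1: "x \<bullet> (Cbar p t n a d *\<^sub>v x) = (\<Sum>l\<in>?W. ?w l * Qf (?C11 l) (?C12 l) (?C22 l) x y0)" .
    have e2: "x \<bullet> (EC *\<^sub>v x) = (\<Sum>l\<in>?W. ?w l * (x \<bullet> (Cinfo p t n d l *\<^sub>v x)))"
      unfolding EC_def by (rule Emat_qf[OF cI x x])
    have "x \<bullet> (Dl *\<^sub>v x) = x \<bullet> (Cbar p t n a d *\<^sub>v x) - x \<bullet> (EC *\<^sub>v x)"
      unfolding Dl_def using Cbc ECc x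
      by (simp add: minus_mult_distrib_mat_vec[of _ t t] scalar_prod_minus_distrib[of _ t])
    also have "\<dots> = (\<Sum>l\<in>?W. ?w l * (Qf (?C11 l) (?C12 l) (?C22 l) x y0 - x \<bullet> (Cinfo p t n d l *\<^sub>v x)))"
      unfolding e1 e2 by (simp add: sum_subtractf algebra_simps)
    also have "0 \<le> \<dots>"
      by (rule sum_nonneg, rule mult_nonneg_nonneg, rule dprob_nonneg[OF dist], simp)
         (insert Cinfo_props(2)[OF x y0], auto)
    finally show "0 \<le> x \<bullet> (Dl *\<^sub>v x)" .
  qed
  have "phi0 p t n a \<Phi> d = (\<Sum>l\<in>?W. ?w l * \<Phi> (Cinfo p t n d l))" unfolding phi0_def ..
  also have "\<dots> \<le> \<Phi> (mixm t ?W ?w (Cinfo p t n d))"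
    using jensen[OF crit finite_dropouts, of p n ?w "Cinfo p t n d"] dprob_nonneg[OF dist]
      dprob_sum[OF dist] Cinfo_props(1) by blast
  also have "\<dots> = \<Phi> EC" unfolding EC_mix ..
  also have "\<dots> \<le> \<Phi> (EC + Dl)" by (rule crit_mono[OF crit nonneg EC_nnd Dl_nnd])
  also have "EC + Dl = Cbar p t n a d" unfolding Dl_def
    by (rule eq_matI, insert Cbc ECc, auto)
  also have "\<Phi> (Cbar p t n a d) = phi1 p t n a \<Phi> d" unfolding phi1_def ..
  finally show ?thesis .
qed

lemma phi0_nonneg:
  assumes dist: "is_dropout_dist p a" and nonneg: "\<forall>C. nnd t C \<longrightarrow> 0 \<le> \<Phi> C"
  shows "0 \<le> phi0 p t n a \<Phi> d"
  unfolding phi0_def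
  by (rule sum_nonneg, rule mult_nonneg_nonneg, rule dprob_nonneg[OF dist], simp)
     (insert nonneg Cinfo_props(1), auto)

theorem lemma2p2:
  fixes p t n :: nat and a :: "nat \<Rightarrow> real" and \<Phi> :: "real mat \<Rightarrow> real"
    and d0s d1s :: "nat \<Rightarrow> nat \<Rightarrow> nat"
  assumes "is_dropout_dist p a"
    and "is_criterion t \<Phi>"
    and "\<forall>C. nnd t C \<longrightarrow> 0 \<le> \<Phi> C"
    and "is_optimal p t n (phi0 p t n a \<Phi>) d0s"
    and "is_optimal p t n (phi1 p t n a \<Phi>) d1s"
  shows "(\<forall>d. is_design p t n d \<longrightarrow> phi0 p t n a \<Phi> d \<le> phi1 p t n a \<Phi> d)
    \<and> (\<forall>d. is_design p t n d \<longrightarrow>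
          phi0 p t n a \<Phi> d / phi0 p t n a \<Phi> d0s
            \<ge> (phi1 p t n a \<Phi> d / phi1 p t n a \<Phi> d1s) * (phi0 p t n a \<Phi> d / phi1 p t n a \<Phi> d))
    \<and> (\<forall>d. is_optimal p t n (phi1 p t n a \<Phi>) d \<longrightarrow>
          phi0 p t n a \<Phi> d / phi0 p t n a \<Phi> d0s \<ge> phi0 p t n a \<Phi> d / phi1 p t n a \<Phi> d)"
proof -
  let ?f0 = "phi0 p t n a \<Phi>" and ?f1 = "phi1 p t n a \<Phi>"
  have le: "\<And>d. ?f0 d \<le> ?f1 d" by (rule main_ineq[OF assms(1,2,3)])
  have nn: "\<And>d. 0 \<le> ?f0 d" by (rule phi0_nonneg[OF assms(1,3)])
  have o0: "is_design p t n d0s" "\<And>d. is_design p t n d \<Longrightarrow> ?f0 d \<le> ?f0 d0s"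
    using assms(4) unfolding is_optimal_def by auto
  have o1: "is_design p t n d1s" "\<And>d. is_design p t n d \<Longrightarrow> ?f1 d \<le> ?f1 d1s"
    using assms(5) unfolding is_optimal_def by auto
  have key: "?f0 d / ?f0 d0s \<ge> (?f1 d / ?f1 d1s) * (?f0 d / ?f1 d)" if d: "is_design p t n d" for d
  proof -
    define x where "x = ?f0 d"
    define y where "y = ?f1 d"
    define X where "X = ?f0 d0s"
    define Y where "Y = ?f1 d1s"
    have x0: "0 \<le> x" and xy: "x \<le> y" and xX: "x \<le> X" and XY: "X \<le> Y" and yY: "y \<le> Y"
      unfolding x_def y_def X_def Y_def using nn le o0(2)[OF d] o1(2)[OF d] o1(2)[OF o0(1)] le[of d0s]
      by (auto intro: order_trans)
    show ?thesis unfolding x_def[symmetric] y_def[symmetric] X_def[symmetric] Y_def[symmetric]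
    proof (cases "y = 0")
      case True thus "(y / Y) * (x / y) \<le> x / X" using x0 xX by simp
    next
      case False
      hence yp: "0 < y" using x0 xy by simp
      have "(y / Y) * (x / y) = x / Y" using yp by simp
      also have "\<dots> \<le> x / X"
      proof (cases "X = 0")
        case True thus ?thesis using x0 xX by simp
      next
        case False
        hence "0 < X" using x0 xX by simp
        thus ?thesis using x0 XY by (simp add: divide_left_mono)
      qed
      finally show "(y / Y) * (x / y) \<le> x / X" .
    qed
  qed
  show ?thesis
  proof (intro conjI allI impI)
    fix d show "?f0 d \<le> ?f1 d" by (rule le)
  next
    fix d assume "is_design p t n d" thus "(?f1 d / ?f1 d1s) * (?f0 d / ?f1 d) \<le> ?f0 d / ?f0 d0s"
      by (rule key)
  next
    fix d assume od: "is_optimal p t n ?f1 d"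
    hence d: "is_design p t n d" and "?f1 d1s \<le> ?f1 d" using o1(1) unfolding is_optimal_def by auto
    hence eq: "?f1 d = ?f1 d1s" using o1(2)[OF d] by simp
    have "(?f1 d / ?f1 d1s) * (?f0 d / ?f1 d) \<le> ?f0 d / ?f0 d0s" by (rule key[OF d])
    moreover have "(?f1 d / ?f1 d1s) * (?f0 d / ?f1 d) = ?f0 d / ?f1 d"
      unfolding eq by (cases "?f1 d1s = 0") auto
    ultimately show "?f0 d / ?f1 d \<le> ?f0 d / ?f0 d0s" by simp
  qed
qed

end
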